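(* Let $m \geqslant 5$ and $k \geqslant 2$ be integers, let $\Delta = \{1,\ldots,m\}^k$, and let $M = S_m \wr S_k$ act on $\Delta$ in product action, identified with a subgroup of $\mathrm{Sym}(\Delta) \cong S_{m^k}$. Let $u = (1\,2\,\cdots\,m) \in S_m$ if $m$ is odd and $u = (1\,2\,\cdots\,m-1)$ if $m$ is even, and let $U = \langle u\rangle$. Let $i \in \{2,\ldots,k\}$ and $r \in \{1,\ldots,m\}$, let $T_r$ be the stabiliser of $r$ in $S_m$, and let $W_i$ be the pointwise stabiliser of $1$ and $i$ in $S_k$. Then there exists $x \in \mathrm{Alt}(\Delta)$ such that \[ M \cap M^{x} = \left(U \times (S_m)^{i-2} \times T_r \times (S_m)^{k-i}\right) \rtimes W_i, \] i.e. $M \cap M^x$ consists of the elements $(v_1,\ldots,v_k)w \in M$ with $v_1 \in U$, $v_i \in T_r$ and $w \in W_i$.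
   Context: In the product action, the base group $(S_m)^k$ acts coordinatewise on $\Delta$ and the top group $S_k$ permutes coordinates. *)

theory Defs
  imports "HOL-Library.FuncSet" "HOL-Combinatorics.Permutations"
begin

definition Delta :: "nat \<Rightarrow> nat \<Rightarrow> (nat \<Rightarrow> nat) set" where
  "Delta m k = {1..k} \<rightarrow>\<^sub>E {1..m}"

text \<open>Product action of the base element v = (v_1,...,v_k) followed by the coordinate
  permutation w; identity outside Delta.\<close>
definition prod_act :: "nat \<Rightarrow> nat \<Rightarrow> (nat \<Rightarrow> nat \<Rightarrow> nat) \<Rightarrow> (nat \<Rightarrow> nat)
    \<Rightarrow> (nat \<Rightarrow> nat) \<Rightarrow> (nat \<Rightarrow> nat)" where
  "prod_act m k v w = (\<lambda>\<delta>. if \<delta> \<in> Delta m k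
      then (\<lambda>j\<in>{1..k}. v j (\<delta> (inv w j))) else \<delta>)"

definition wreath_M :: "nat \<Rightarrow> nat \<Rightarrow> ((nat \<Rightarrow> nat) \<Rightarrow> (nat \<Rightarrow> nat)) set" where
  "wreath_M m k = {prod_act m k v w | v w.
      (\<forall>j\<in>{1..k}. v j permutes {1..m}) \<and> w permutes {1..k}}"

definition Alt_Delta :: "nat \<Rightarrow> nat \<Rightarrow> ((nat \<Rightarrow> nat) \<Rightarrow> (nat \<Rightarrow> nat)) set" where
  "Alt_Delta m k = {x. x permutes Delta m k \<and> evenperm x}"

definition conj_set :: "('a \<Rightarrow> 'a) \<Rightarrow> ('a \<Rightarrow> 'a) set \<Rightarrow> ('a \<Rightarrow> 'a) set" where
  "conj_set x G = (\<lambda>g. inv x \<circ> g \<circ> x) ` G"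

definition ucyc :: "nat \<Rightarrow> nat \<Rightarrow> nat" where
  "ucyc m = (let L = (if odd m then m else m - 1) in
      (\<lambda>a. if 1 \<le> a \<and> a < L then a + 1 else if a = L then 1 else a))"

definition U_grp :: "nat \<Rightarrow> (nat \<Rightarrow> nat) set" where
  "U_grp m = range (\<lambda>n. ucyc m ^^ n)"

definition T_stab :: "nat \<Rightarrow> nat \<Rightarrow> (nat \<Rightarrow> nat) set" where
  "T_stab m r = {\<sigma>. \<sigma> permutes {1..m} \<and> \<sigma> r = r}"

definition W_stab :: "nat \<Rightarrow> nat \<Rightarrow> (nat \<Rightarrow> nat) set" where
  "W_stab k i = {w. w permutes {1..k} \<and> w 1 = 1 \<and> w i = i}"

definition target_grp :: "nat \<Rightarrow> nat \<Rightarrow> nat \<Rightarrow> nat \<Rightarrow> ((nat \<Rightarrow> nat) \<Rightarrow> (nat \<Rightarrow> nat)) set" where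
  "target_grp m k i r = {prod_act m k v w | v w.
      (\<forall>j\<in>{1..k}. v j permutes {1..m}) \<and> v 1 \<in> U_grp m \<and> v i \<in> T_stab m r
      \<and> w \<in> W_stab k i}"

end

theory Submission
  imports Defs
begin

definition LL :: "nat \<Rightarrow> nat" where "LL m = (if odd m then m else m - 1)"

lemma ucyc_alt: "ucyc m a = (if 1 \<le> a \<and> a < LL m then a + 1 else if a = LL m then 1 else a)"
  unfolding ucyc_def LL_def Let_def by simp

lemma LL_ge: "m \<ge> 5 \<Longrightarrow> LL m \<ge> 4 \<and> LL m \<le> m \<and> odd (LL m) \<and> (\<forall>a. a \<in> {1..m} \<and> a \<notin> {1..LL m} \<longrightarrow> a = m)"
  unfolding LL_def by auto

lemma ucyc_pow_in:
  assumes "LL m \<ge> 1" "1 \<le> a" "a \<le> LL m"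
  shows "(ucyc m ^^ n) a = (a - 1 + n) mod LL m + 1"
proof (induction n)
  case 0 then show ?case using assms by simp
next
  case (Suc n)
  define b where "b = (a - 1 + n) mod LL m"
  have b: "b < LL m" using assms unfolding b_def by simp
  define c where "c = a - 1 + n"
  have e: "a - 1 + Suc n = Suc c" using assms c_def by simp
  have s1: "(ucyc m ^^ Suc n) a = ucyc m (b + 1)" using Suc by (simp add: b_def)
  have s2: "ucyc m (b + 1) = (if b + 1 < LL m then b + 2 else 1)" using b by (simp add: ucyc_alt)
  have s3: "(if b + 1 < LL m then b + 2 else 1) = (a - 1 + Suc n) mod LL m + 1"
    unfolding e using b mod_Suc[of c "LL m"] unfolding b_def c_def by auto
  have "(ucyc m ^^ Suc n) a = (a - 1 + Suc n) mod LL m + 1" using s1 s2 s3 by simp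
  then show ?case .
qed

lemma ucyc_pow_out:
  assumes "a \<notin> {1..LL m}" "LL m \<ge> 1"
  shows "(ucyc m ^^ n) a = a"
  using assms by (induction n) (auto simp: ucyc_alt)

lemma ucyc_fix_iff:
  assumes "LL m \<ge> 2"
  shows "ucyc m a = a \<longleftrightarrow> a \<notin> {1..LL m}"
  using assms by (auto simp: ucyc_alt)

lemma ucyc_permutes:
  assumes "m \<ge> 5"
  shows "ucyc m permutes {1..m}"
proof -
  have L: "LL m \<ge> 4" "LL m \<le> m" using LL_ge[OF assms] by auto
  have inj: "inj_on (ucyc m) {1..m}"
  proof (rule inj_onI)
    fix a b assume "a \<in> {1..m}" "b \<in> {1..m}" "ucyc m a = ucyc m b"
    then show "a = b" using L unfolding ucyc_alt by (simp split: if_splits)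
  qed
  have img: "ucyc m ` {1..m} \<subseteq> {1..m}" using L by (auto simp: ucyc_alt)
  have "bij_betw (ucyc m) {1..m} {1..m}"
    using inj img by (simp add: bij_betw_def endo_inj_surj)
  moreover have "\<And>a. a \<notin> {1..m} \<Longrightarrow> ucyc m a = a" using L by (auto simp: ucyc_alt)
  ultimately show ?thesis by (rule bij_imp_permutes)
qed

lemma ucyc_pow_L:
  assumes "LL m \<ge> 1"
  shows "ucyc m ^^ LL m = id"
proof
  fix a show "(ucyc m ^^ LL m) a = id a"
  proof (cases "a \<in> {1..LL m}")
    case True
    have "(a - 1 + LL m) mod LL m = a - 1" using True by (simp only: mod_add_self2, intro mod_less) auto
    moreover have "a + LL m - Suc 0 = a - 1 + LL m" using True by simp
    ultimately have "(a + LL m - Suc 0) mod LL m = a - 1" by simp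
    then show ?thesis using ucyc_pow_in[OF assms, of a "LL m"] True by simp
  next
    case False then show ?thesis using assms by (simp add: ucyc_pow_out)
  qed
qed

lemma funpow_comm: "(\<And>a. f (v a) = v (f a)) \<Longrightarrow> (f ^^ n) (v a) = v ((f ^^ n) a)"
  by (induction n) auto

lemma centralizer:
  assumes m5: "m \<ge> 5" and v: "v permutes {1..m}"
    and c: "(ucyc m \<circ> ucyc m) \<circ> v = v \<circ> (ucyc m \<circ> ucyc m)"
  shows "v \<in> U_grp m"
proof -
  let ?u = "ucyc m" let ?L = "LL m"
  have L: "?L \<ge> 4" "?L \<le> m" "odd ?L" "\<And>a. a \<in> {1..m} \<Longrightarrow> a \<notin> {1..?L} \<Longrightarrow> a = m"
    using LL_ge[OF m5] by auto
  have u2: "?u \<circ> ?u = ?u ^^ 2" by (simp add: numeral_2_eq_2)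
  have c1: "(?u ^^ 2) (v a) = v ((?u ^^ 2) a)" for a using c u2 by (metis comp_apply)
  have cp: "((?u ^^ 2) ^^ n) (v a) = v (((?u ^^ 2) ^^ n) a)" for n a
    by (rule funpow_comm, rule c1)
  obtain h where h: "?L + 1 = 2 * h" using L(3) by (metis odd_Suc_div_two Suc_eq_plus1 mult_2 dvd_mult_div_cancel odd_even_add odd_one)
  have "?u = ?u ^^ (?L + 1)" using ucyc_pow_L[of m] L by (simp add: funpow_add)
  also have "\<dots> = (?u ^^ 2) ^^ h" using h by (simp add: funpow_mult)
  finally have uh: "?u = (?u ^^ 2) ^^ h" .
  have cua: "?u (v a) = v (?u a)" for a using cp[of h a] uh by simp
  have cuna: "(?u ^^ n) (v a) = v ((?u ^^ n) a)" for n a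
    by (rule funpow_comm, rule cua)
  have injv: "inj v" using v by (rule permutes_inj)
  have v1: "v 1 \<in> {1..?L}"
  proof (rule ccontr)
    assume "v 1 \<notin> {1..?L}"
    then have "?u (v 1) = v 1" using L by (simp add: ucyc_fix_iff)
    then have "v (?u 1) = v 1" using cua by simp
    then have "?u 1 = 1" using injv by (simp add: inj_eq)
    then show False using L by (simp add: ucyc_alt)
  qed
  define n0 where "n0 = v 1 - 1"
  have pa: "(?u ^^ (a - 1)) 1 = a" if "a \<in> {1..?L}" for a
    using ucyc_pow_in[of m 1 "a - 1"] that L by auto
  have vn0: "v 1 = (?u ^^ n0) 1" using pa[OF v1] n0_def by simp
  have "v a = (?u ^^ n0) a" for a
  proof (cases "a \<in> {1..?L}")
    case True
    have "v a = v ((?u ^^ (a - 1)) 1)" using pa[OF True] by simp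
    also have "\<dots> = (?u ^^ (a - 1)) ((?u ^^ n0) 1)" using cuna vn0 by metis
    also have "\<dots> = (?u ^^ n0) ((?u ^^ (a - 1)) 1)"
      by (metis add.commute comp_apply funpow_add)
    finally show ?thesis using pa[OF True] by simp
  next
    case False
    have r: "(?u ^^ n0) a = a" using False L by (simp add: ucyc_pow_out)
    show ?thesis
    proof (cases "a \<in> {1..m}")
      case False then show ?thesis using r v by (simp add: permutes_not_in)
    next
      case True
      have am: "a = m" using L(4) True False by blast
      have "?u a = a" using ucyc_fix_iff[of m a] False L by simp
      then have "?u (v a) = v a" using cua[of a] by simp
      then have "v a \<notin> {1..?L}" using L by (simp add: ucyc_fix_iff)
      moreover have "v a \<in> {1..m}" using True permutes_in_image[OF v] by blast
      ultimately have "v a = m" using L(4) by blast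
      then show ?thesis using am r by simp
    qed
  qed
  then have "v = ?u ^^ n0" by auto
  then show ?thesis unfolding U_grp_def by auto
qed


definition twist :: "nat \<Rightarrow> nat \<Rightarrow> nat \<Rightarrow> nat \<Rightarrow> (nat \<Rightarrow> nat) \<Rightarrow> (nat \<Rightarrow> nat)" where
  "twist m k i r \<delta> = (if \<delta> \<in> Delta m k \<and> \<delta> i = r then \<delta>(1 := ucyc m (\<delta> 1)) else \<delta>)"

lemma upd_in:
  "\<delta> \<in> Delta m k \<Longrightarrow> j \<in> {1..k} \<Longrightarrow> c \<in> {1..m} \<Longrightarrow> \<delta>(j := c) \<in> Delta m k"
  unfolding Delta_def by (auto simp: PiE_iff extensional_def)

lemma finite_Delta: "finite (Delta m k)"
  unfolding Delta_def by (simp add: finite_PiE)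

lemma twist_permutes:
  assumes m5: "m \<ge> 5" and i1: "i \<noteq> 1" and k1: "1 \<in> {1..k}"
  shows "twist m k i r permutes Delta m k"
proof -
  let ?t = "twist m k i r" let ?D = "Delta m k"
  have up: "ucyc m permutes {1..m}" using ucyc_permutes[OF m5] .
  have d1: "\<delta> 1 \<in> {1..m}" if "\<delta> \<in> ?D" for \<delta> using that k1 unfolding Delta_def by auto
  have img: "?t ` ?D \<subseteq> ?D"
  proof
    fix y assume "y \<in> ?t ` ?D"
    then obtain \<delta> where d: "\<delta> \<in> ?D" "y = ?t \<delta>" by blast
    show "y \<in> ?D"
      using d d1[OF d(1)] upd_in[OF d(1) k1, of "ucyc m (\<delta> 1)"] permutes_in_image[OF up]
      unfolding twist_def by auto
  qed
  have inj: "inj_on ?t ?D"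
  proof (rule inj_onI)
    fix \<delta> \<delta>' assume d: "\<delta> \<in> ?D" "\<delta>' \<in> ?D" and eq: "?t \<delta> = ?t \<delta>'"
    have ti: "?t \<eta> i = \<eta> i" for \<eta> using i1 unfolding twist_def by auto
    have ii: "\<delta> i = \<delta>' i" using ti[of \<delta>] ti[of \<delta>'] eq by simp
    show "\<delta> = \<delta>'"
    proof (cases "\<delta> i = r")
      case True
      then have e2: "\<delta>(1 := ucyc m (\<delta> 1)) = \<delta>'(1 := ucyc m (\<delta>' 1))"
        using eq d ii unfolding twist_def by simp
      then have "ucyc m (\<delta> 1) = ucyc m (\<delta>' 1)" by (metis fun_upd_same)
      then have "\<delta> 1 = \<delta>' 1" using permutes_inj[OF up] by (simp add: inj_eq)
      then show ?thesis using e2 by (metis fun_upd_triv fun_upd_upd)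
    next
      case False
      then show ?thesis using eq ii unfolding twist_def by simp
    qed
  qed
  have "bij_betw ?t ?D ?D"
    using inj img finite_Delta by (simp add: bij_betw_def endo_inj_surj)
  moreover have "\<And>\<delta>. \<delta> \<notin> ?D \<Longrightarrow> ?t \<delta> = \<delta>" unfolding twist_def by simp
  ultimately show ?thesis by (rule bij_imp_permutes)
qed

lemma twist2_apply:
  assumes m5: "m \<ge> 5" and i1: "i \<noteq> 1" and k1: "1 \<in> {1..k}"
  shows "(twist m k i r \<circ> twist m k i r) \<delta> =
    (if \<delta> \<in> Delta m k \<and> \<delta> i = r then \<delta>(1 := ucyc m (ucyc m (\<delta> 1))) else \<delta>)"
proof (cases "\<delta> \<in> Delta m k \<and> \<delta> i = r")
  case True
  have "twist m k i r \<delta> \<in> Delta m k" using twist_permutes[OF assms] True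
    by (simp add: permutes_in_image)
  then show ?thesis using True i1 unfolding twist_def by simp
next
  case False
  then have "twist m k i r \<delta> = \<delta>" unfolding twist_def by auto
  then show ?thesis using False by auto
qed

lemma twist2_alt:
  assumes m5: "m \<ge> 5" and i1: "i \<noteq> 1" and k1: "1 \<in> {1..k}"
  shows "twist m k i r \<circ> twist m k i r \<in> Alt_Delta m k"
proof -
  have p: "twist m k i r permutes Delta m k" by (rule twist_permutes[OF assms])
  have pp: "permutation (twist m k i r)" using permutes_imp_permutation[OF finite_Delta p] .
  show ?thesis unfolding Alt_Delta_def
    using permutes_compose[OF p p] evenperm_comp[OF pp pp] by simp
qed

lemma prod_act_apply:
  "w permutes {1..k} \<Longrightarrow> \<delta> \<in> Delta m k \<Longrightarrow> j \<in> {1..k} \<Longrightarrow> prod_act m k v w \<delta> j = v j (\<delta> (inv w j))"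
  unfolding prod_act_def by simp

lemma prod_act_in:
  assumes "\<forall>j\<in>{1..k}. v j permutes {1..m}" "w permutes {1..k}" "\<delta> \<in> Delta m k"
  shows "prod_act m k v w \<delta> \<in> Delta m k"
proof -
  have "v j (\<delta> (inv w j)) \<in> {1..m}" if j: "j \<in> {1..k}" for j
  proof -
    have "inv w j \<in> {1..k}"
      using j permutes_in_image[OF permutes_inv[OF assms(2)]] by blast
    then have "\<delta> (inv w j) \<in> {1..m}" using assms(3) unfolding Delta_def by (simp add: PiE_iff)
    moreover have "v j permutes {1..m}" using assms(1) j by blast
    ultimately show ?thesis by (metis permutes_in_image)
  qed
  moreover have "prod_act m k v w \<delta> = (\<lambda>j\<in>{1..k}. v j (\<delta> (inv w j)))"
    using assms(3) unfolding prod_act_def by simp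
  ultimately show ?thesis unfolding Delta_def by (simp add: restrict_PiE_iff)
qed

lemma prod_act_out: "\<delta> \<notin> Delta m k \<Longrightarrow> prod_act m k v w \<delta> = \<delta>"
  unfolding prod_act_def by simp

lemma key_coord:
  assumes w: "w permutes {1..k}" and d: "\<delta> \<in> Delta m k" "\<delta>' \<in> Delta m k"
    and same: "\<forall>j\<in>{1..k}. j \<noteq> p \<longrightarrow> \<delta> j = \<delta>' j" and a: "a \<in> {1..k}"
    and ne: "prod_act m k v w \<delta> a \<noteq> prod_act m k v w \<delta>' a"
  shows "inv w a = p"
proof (rule ccontr)
  assume "inv w a \<noteq> p"
  moreover have "inv w a \<in> {1..k}"
    using a permutes_in_image[OF permutes_inv[OF w]] by blast
  ultimately have "\<delta> (inv w a) = \<delta>' (inv w a)" using same by blast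
  then show False using ne prod_act_apply[OF w d(1) a] prod_act_apply[OF w d(2) a] by simp
qed

lemma upd_in2: "\<delta> \<in> Delta m k \<Longrightarrow> j \<in> {1..k} \<Longrightarrow> c \<in> {1..m} \<Longrightarrow> j' \<in> {1..k} \<Longrightarrow> c' \<in> {1..m}
  \<Longrightarrow> \<delta>(j := c, j' := c') \<in> Delta m k"
  by (intro upd_in) auto

lemma inv_fix: "w permutes S \<Longrightarrow> w a = a \<Longrightarrow> inv w a = a"
  by (metis permutes_inverses(2))

theorem lemma4p3:
  fixes m k i r :: nat
  assumes "m \<ge> 5" and "k \<ge> 2" and "i \<in> {2..k}" and "r \<in> {1..m}"
  shows "\<exists>x \<in> Alt_Delta m k.
           wreath_M m k \<inter> conj_set x (wreath_M m k) = target_grp m k i r"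
proof -
  note m5 = assms(1)
  let ?D = "Delta m k"
  let ?u = "ucyc m"
  define x where "x = twist m k i r \<circ> twist m k i r"
  define u2 where "u2 = ?u \<circ> ?u"
  define e where "e = (\<lambda>j\<in>{1..k}. 1::nat)"
  have i1: "i \<noteq> 1" "i \<in> {1..k}" "1 \<in> {1..k}" using assms by auto
  have xapp: "x \<delta> = (if \<delta> \<in> ?D \<and> \<delta> i = r then \<delta>(1 := u2 (\<delta> 1)) else \<delta>)" for \<delta>
    unfolding x_def u2_def using twist2_apply[OF m5 i1(1) i1(3)] by simp
  have xperm: "x permutes ?D" unfolding x_def
    using permutes_compose[OF twist_permutes[OF m5 i1(1) i1(3)] twist_permutes[OF m5 i1(1) i1(3)]] .
  have xalt: "x \<in> Alt_Delta m k" unfolding x_def by (rule twist2_alt[OF m5 i1(1) i1(3)])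
  have up: "?u permutes {1..m}" by (rule ucyc_permutes[OF m5])
  have u2p: "u2 permutes {1..m}" unfolding u2_def by (rule permutes_compose[OF up up])
  have u21m: "u2 1 \<in> {1..m}" using permutes_in_image[OF u2p, of 1] m5 by auto
  have u21: "u2 1 \<noteq> 1" using LL_ge[OF m5] unfolding u2_def by (simp add: ucyc_alt)
  have xa: "x \<eta> a = \<eta> a" if "a \<noteq> 1" for \<eta> a using that by (simp add: xapp)
  have x1: "x \<eta> 1 = (if \<eta> i = r then u2 (\<eta> 1) else \<eta> 1)" if "\<eta> \<in> ?D" for \<eta>
    using that by (simp add: xapp)
  have xnr: "x \<eta> = \<eta>" if "\<eta> i \<noteq> r" for \<eta> using that by (simp add: xapp)
  have eD: "e \<in> ?D" unfolding e_def Delta_def using m5 by auto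
  have m1: "1 \<in> {1..m}" "2 \<in> {1..m}" "3 \<in> {1..m}" using m5 by auto
  define s where "s = (if r = 1 then 2 else (1::nat))"
  have s: "s \<in> {1..m}" "s \<noteq> r" unfolding s_def using m5 by auto
  show ?thesis
  proof (intro bexI[OF _ xalt] equalityI subsetI)
    fix f assume "f \<in> wreath_M m k \<inter> conj_set x (wreath_M m k)"
    then obtain v w v' w' where f: "f = prod_act m k v w" and v: "\<forall>j\<in>{1..k}. v j permutes {1..m}"
      and w: "w permutes {1..k}" and v': "\<forall>j\<in>{1..k}. v' j permutes {1..m}"
      and w': "w' permutes {1..k}" and fx: "f = inv x \<circ> prod_act m k v' w' \<circ> x"
      unfolding wreath_M_def conj_set_def by blast
    let ?g = "prod_act m k v' w'"
    have comm: "?g (x \<epsilon>) = x (f \<epsilon>)" for \<epsilon>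
    proof -
      have "x (f \<epsilon>) = x (inv x (?g (x \<epsilon>)))" using fx by simp
      also have "\<dots> = ?g (x \<epsilon>)" using permutes_inverses(1)[OF xperm] by simp
      finally show ?thesis by simp
    qed
    have K: "inv w' a = p" if "\<delta> \<in> ?D" "\<delta>' \<in> ?D" "\<forall>j\<in>{1..k}. j \<noteq> p \<longrightarrow> \<delta> j = \<delta>' j"
      "a \<in> {1..k}" "?g \<delta> a \<noteq> ?g \<delta>' a" for \<delta> \<delta>' p a
      using key_coord[OF w' that] .
    have fa: "f \<epsilon> j = v j (\<epsilon> (inv w j))" if "\<epsilon> \<in> ?D" "j \<in> {1..k}" for \<epsilon> j
      unfolding f using prod_act_apply[OF w that] .
    have fD: "f \<epsilon> \<in> ?D" if "\<epsilon> \<in> ?D" for \<epsilon> unfolding f using prod_act_in[OF v w that] .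
    have vinj: "v j a = v j b \<longleftrightarrow> a = b" if "j \<in> {1..k}" for j a b
      using v that permutes_inj by (metis injD)
    have vin: "v j a \<in> {1..m} \<longleftrightarrow> a \<in> {1..m}" if "j \<in> {1..k}" for j a
      using v that by (metis permutes_in_image)
    have vinv: "v j (inv (v j) a) = a" "inv (v j) a \<in> {1..m} \<longleftrightarrow> a \<in> {1..m}" if "j \<in> {1..k}" for j a
      using v that permutes_inverses(1) permutes_in_image permutes_inv by metis+
    have winv: "inv w j \<in> {1..k}" if "j \<in> {1..k}" for j
      using that permutes_in_image[OF permutes_inv[OF w]] by blast
    show "f \<in> target_grp m k i r"
    proof (cases "w 1 = 1")
      case False
      define a where "a = w 1"
      have a: "a \<in> {1..k}" "a \<noteq> 1" "inv w a = 1"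
        using False permutes_in_image[OF w, of 1] i1(3) permutes_inverses(2)[OF w, of 1]
        unfolding a_def by auto
      define \<epsilon>1 where "\<epsilon>1 = e(1 := 1, i := r)"
      define \<epsilon>2 where "\<epsilon>2 = e(1 := u2 1, i := s)"
      have d1: "\<epsilon>1 \<in> ?D" "\<epsilon>2 \<in> ?D" unfolding \<epsilon>1_def \<epsilon>2_def
        using upd_in2[OF eD] i1 m1 s assms(4) u21m by auto
      have x\<epsilon>1: "x \<epsilon>1 = e(1 := u2 1, i := r)" using d1 i1 by (auto simp: xapp \<epsilon>1_def)
      have x\<epsilon>2: "x \<epsilon>2 = \<epsilon>2" using s i1 by (intro xnr) (simp add: \<epsilon>2_def)
      have "?g (x \<epsilon>1) a \<noteq> ?g (x \<epsilon>2) a"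
        unfolding comm using xa[OF a(2)] fa[OF _ a(1)] d1 a u21 vinj[OF a(1)] i1
        by (simp add: \<epsilon>1_def \<epsilon>2_def)
      then have A1: "inv w' a = i"
        using K[of "x \<epsilon>1" "x \<epsilon>2" i a] d1 a(1) x\<epsilon>1 x\<epsilon>2 i1 permutes_in_image[OF xperm, of \<epsilon>1]
        by (simp add: \<epsilon>2_def)
      define \<epsilon>3 where "\<epsilon>3 = e(1 := 1, i := s)"
      define \<epsilon>4 where "\<epsilon>4 = e(1 := 2, i := s)"
      have d3: "\<epsilon>3 \<in> ?D" "\<epsilon>4 \<in> ?D" unfolding \<epsilon>3_def \<epsilon>4_def
        using upd_in2[OF eD] i1 m1 s by auto
      have x3: "x \<epsilon>3 = \<epsilon>3" "x \<epsilon>4 = \<epsilon>4" using s i1 by (auto intro!: xnr simp: \<epsilon>3_def \<epsilon>4_def)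
      have "?g (x \<epsilon>3) a \<noteq> ?g (x \<epsilon>4) a"
        unfolding comm using xa[OF a(2)] fa[OF _ a(1)] d3 a vinj[OF a(1)] i1
        by (simp add: \<epsilon>3_def \<epsilon>4_def)
      then have "inv w' a = 1"
        using K[of "x \<epsilon>3" "x \<epsilon>4" 1 a] d3 x3 a(1) i1
        by (simp add: \<epsilon>3_def \<epsilon>4_def)
      then show ?thesis using A1 i1 by simp
    next
      case w1: True
      have iw1: "inv w 1 = 1" using inv_fix[OF w w1] .
      define c where "c = inv (v 1) 1"
      have c: "c \<in> {1..m}" "v 1 c = 1" unfolding c_def using vinv[OF i1(3)] m1 by auto
      define \<beta>1 where "\<beta>1 = inv (v i) r"
      have \<beta>1: "\<beta>1 \<in> {1..m}" "v i \<beta>1 = r" unfolding \<beta>1_def using vinv[OF i1(2)] assms(4) by auto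
      define \<epsilon>3 where "\<epsilon>3 = e(1 := 1, i := s)"
      show ?thesis
      proof (cases "w i = i")
        case False
        define b where "b = inv w i"
        have b: "b \<in> {1..k}" "b \<noteq> i" "b \<noteq> 1" "w b = i"
        proof -
          have wb: "w b = i" unfolding b_def by (rule permutes_inverses(1)[OF w])
          then show "b \<in> {1..k}" "b \<noteq> i" "b \<noteq> 1" "w b = i"
            using winv[OF i1(2)] False w1 i1 unfolding b_def by auto
        qed
        define \<beta>2 where "\<beta>2 = (if \<beta>1 = 1 then 2 else (1::nat))"
        have \<beta>2: "\<beta>2 \<in> {1..m}" "v i \<beta>2 \<noteq> r"
          unfolding \<beta>2_def using m1 \<beta>1 vinj[OF i1(2)] by auto
        define \<epsilon>1 where "\<epsilon>1 = e(1 := c, i := s, b := \<beta>1)"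
        define \<epsilon>2 where "\<epsilon>2 = e(1 := c, i := s, b := \<beta>2)"
        have d1: "\<epsilon>1 \<in> ?D" "\<epsilon>2 \<in> ?D" unfolding \<epsilon>1_def \<epsilon>2_def
          using upd_in[OF upd_in2[OF eD]] i1 m1 s c \<beta>1 \<beta>2 b by auto
        have x12: "x \<epsilon>1 = \<epsilon>1" "x \<epsilon>2 = \<epsilon>2" using s i1 b by (auto intro!: xnr simp: \<epsilon>1_def \<epsilon>2_def)
        have "?g (x \<epsilon>1) 1 \<noteq> ?g (x \<epsilon>2) 1"
          unfolding comm using x1[OF fD] fa d1 i1 b c \<beta>1 \<beta>2 iw1 u21
          by (simp add: \<epsilon>1_def \<epsilon>2_def b_def[symmetric])
        then have B1: "inv w' 1 = b"
          using K[of "x \<epsilon>1" "x \<epsilon>2" b 1] d1 x12 i1 b by (simp add: \<epsilon>1_def \<epsilon>2_def)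
        define \<epsilon>3 where "\<epsilon>3 = e(1 := 1, i := s, b := \<beta>2)"
        define \<epsilon>4 where "\<epsilon>4 = e(1 := 2, i := s, b := \<beta>2)"
        have d3: "\<epsilon>3 \<in> ?D" "\<epsilon>4 \<in> ?D" unfolding \<epsilon>3_def \<epsilon>4_def
          using upd_in[OF upd_in2[OF eD]] i1 m1 s \<beta>2 b by auto
        have x3: "x \<epsilon>3 = \<epsilon>3" "x \<epsilon>4 = \<epsilon>4" using s i1 b by (auto intro!: xnr simp: \<epsilon>3_def \<epsilon>4_def)
        have "?g (x \<epsilon>3) 1 \<noteq> ?g (x \<epsilon>4) 1"
          unfolding comm using x1[OF fD] fa d3 i1 b \<beta>2 iw1 vinj[OF i1(3)]
          by (simp add: \<epsilon>3_def \<epsilon>4_def b_def[symmetric])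
        then have "inv w' 1 = 1"
          using K[of "x \<epsilon>3" "x \<epsilon>4" 1 1] d3 x3 i1 b by (simp add: \<epsilon>3_def \<epsilon>4_def)
        then show ?thesis using B1 b by simp
      next
        case wi: True
        have iwi: "inv w i = i" using inv_fix[OF w wi] .
        define t where "t = (if r \<noteq> 1 \<and> \<beta>1 \<noteq> 1 then 1 else if r \<noteq> 2 \<and> \<beta>1 \<noteq> 2 then 2 else (3::nat))"
        have t: "t \<in> {1..m}" "t \<noteq> r" "t \<noteq> \<beta>1" unfolding t_def using m1 by auto
        have vt: "v i t \<noteq> r" using t \<beta>1 vinj[OF i1(2)] by metis
        define \<epsilon>3 where "\<epsilon>3 = e(1 := 1, i := t)"
        define \<epsilon>4 where "\<epsilon>4 = e(1 := 2, i := t)"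
        have d3: "\<epsilon>3 \<in> ?D" "\<epsilon>4 \<in> ?D" unfolding \<epsilon>3_def \<epsilon>4_def
          using upd_in2[OF eD] i1 m1 t by auto
        have x3: "x \<epsilon>3 = \<epsilon>3" "x \<epsilon>4 = \<epsilon>4" using t i1 by (auto intro!: xnr simp: \<epsilon>3_def \<epsilon>4_def)
        have "?g (x \<epsilon>3) 1 \<noteq> ?g (x \<epsilon>4) 1"
          unfolding comm using x1[OF fD] fa d3 i1 vt iw1 iwi vinj[OF i1(3)]
          by (simp add: \<epsilon>3_def \<epsilon>4_def)
        then have C0: "inv w' 1 = 1"
          using K[of "x \<epsilon>3" "x \<epsilon>4" 1 1] d3 x3 i1 by (simp add: \<epsilon>3_def \<epsilon>4_def)
        show ?thesis
        proof (cases "v i r = r")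
          case False
          have b1r: "\<beta>1 \<noteq> r" using False \<beta>1 by auto
          define \<epsilon>1 where "\<epsilon>1 = e(1 := c, i := \<beta>1)"
          define \<epsilon>2 where "\<epsilon>2 = e(1 := c, i := t)"
          have d1: "\<epsilon>1 \<in> ?D" "\<epsilon>2 \<in> ?D" unfolding \<epsilon>1_def \<epsilon>2_def
            using upd_in2[OF eD] i1 c \<beta>1 t by auto
          have x12: "x \<epsilon>1 = \<epsilon>1" "x \<epsilon>2 = \<epsilon>2" using t b1r i1 by (auto intro!: xnr simp: \<epsilon>1_def \<epsilon>2_def)
          have "?g (x \<epsilon>1) 1 \<noteq> ?g (x \<epsilon>2) 1"
            unfolding comm using x1[OF fD] fa d1 i1 vt iw1 iwi c \<beta>1 u21
            by (simp add: \<epsilon>1_def \<epsilon>2_def)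
          then have "inv w' 1 = i"
            using K[of "x \<epsilon>1" "x \<epsilon>2" i 1] d1 x12 i1 by (simp add: \<epsilon>1_def \<epsilon>2_def)
          then show ?thesis using C0 i1 by simp
        next
          case vir: True
          show ?thesis
          proof (cases "u2 \<circ> v 1 = v 1 \<circ> u2")
            case False
            then obtain c0 where c0: "u2 (v 1 c0) \<noteq> v 1 (u2 c0)" by (auto simp: fun_eq_iff)
            have c0m: "c0 \<in> {1..m}"
            proof (rule ccontr)
              assume "c0 \<notin> {1..m}"
              then show False using c0 permutes_not_in[OF u2p] v i1
                by (metis permutes_not_in)
            qed
            have u2c0: "u2 c0 \<in> {1..m}" using c0m permutes_in_image[OF u2p, of c0] by blast
            define \<epsilon>1 where "\<epsilon>1 = e(1 := c0, i := r)"
            define \<epsilon>2 where "\<epsilon>2 = e(1 := u2 c0, i := t)"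
            have d1: "\<epsilon>1 \<in> ?D" "\<epsilon>2 \<in> ?D" unfolding \<epsilon>1_def \<epsilon>2_def
              using upd_in2[OF eD] i1 c0m u2c0 t assms(4) by auto
            have x\<epsilon>1: "x \<epsilon>1 = e(1 := u2 c0, i := r)" using d1 i1 by (auto simp: xapp \<epsilon>1_def)
            have x\<epsilon>2: "x \<epsilon>2 = \<epsilon>2" using t i1 by (intro xnr) (simp add: \<epsilon>2_def)
            have "?g (x \<epsilon>1) 1 \<noteq> ?g (x \<epsilon>2) 1"
              unfolding comm using x1[OF fD] fa d1 i1 vt iw1 iwi vir c0
              by (simp add: \<epsilon>1_def \<epsilon>2_def)
            then have "inv w' 1 = i"
              using K[of "x \<epsilon>1" "x \<epsilon>2" i 1] d1 x\<epsilon>1 x\<epsilon>2 i1 permutes_in_image[OF xperm, of \<epsilon>1]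
              by (simp add: \<epsilon>2_def)
            then show ?thesis using C0 i1 by simp
          next
            case True
            have "v 1 \<in> U_grp m"
              using centralizer[OF m5 _ True[unfolded u2_def]] v i1 by blast
            moreover have "v i \<in> T_stab m r" using v i1 vir unfolding T_stab_def by blast
            moreover have "w \<in> W_stab k i" using w w1 wi unfolding W_stab_def by blast
            ultimately show ?thesis unfolding target_grp_def f using v by blast
          qed
        qed
      qed
    qed
  next
    fix f assume "f \<in> target_grp m k i r"
    then obtain v w where f: "f = prod_act m k v w" and v: "\<forall>j\<in>{1..k}. v j permutes {1..m}"
      and U: "v 1 \<in> U_grp m" and T: "v i \<in> T_stab m r" and W: "w \<in> W_stab k i"
      unfolding target_grp_def by blast
    have w: "w permutes {1..k}" and w1: "w 1 = 1" and wi: "w i = i" using W unfolding W_stab_def by auto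
    have fM: "f \<in> wreath_M m k" unfolding wreath_M_def f using v w by blast
    obtain n where n: "v 1 = ?u ^^ n" using U unfolding U_grp_def by auto
    have vu2: "u2 (v 1 a) = v 1 (u2 a)" for a
    proof -
      have sw: "?u ((?u ^^ n) b) = (?u ^^ n) (?u b)" for b by (rule funpow_swap1)
      show ?thesis unfolding n u2_def comp_def sw ..
    qed
    have vir: "v i r = r" using T unfolding T_stab_def by auto
    have vi_iff: "v i a = r \<longleftrightarrow> a = r" for a
    proof -
      have "inj (v i)" using T unfolding T_stab_def by (auto intro: permutes_inj)
      then show ?thesis using vir by (metis injD)
    qed
    have iw1: "inv w 1 = 1" using inv_fix[OF w w1] .
    have iwi: "inv w i = i" using inv_fix[OF w wi] .
    have iwne: "inv w j \<noteq> 1" if "j \<noteq> 1" for j using that permutes_inverses(1)[OF w, of j] w1 by auto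
    have xf: "x (f \<delta>) = f (x \<delta>)" for \<delta>
    proof (cases "\<delta> \<in> ?D")
      case False
      then show ?thesis unfolding f using xapp prod_act_out by simp
    next
      case True
      have fD: "f \<delta> \<in> ?D" unfolding f using prod_act_in[OF v w True] .
      have xD: "x \<delta> \<in> ?D" using True xperm by (simp add: permutes_in_image)
      have fxD: "f (x \<delta>) \<in> ?D" unfolding f using prod_act_in[OF v w xD] .
      have xfD: "x (f \<delta>) \<in> ?D" using fD xperm by (simp add: permutes_in_image)
      show ?thesis
      proof (rule PiE_ext[OF xfD[unfolded Delta_def] fxD[unfolded Delta_def]])
        fix j assume j: "j \<in> {1..k}"
        show "x (f \<delta>) j = f (x \<delta>) j"
        proof (cases "j = 1")
          case True
          have a1: "f \<delta> 1 = v 1 (\<delta> 1)" unfolding f using prod_act_apply[OF w \<open>\<delta> \<in> ?D\<close> i1(3)] iw1 by simp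
          have ai: "f \<delta> i = v i (\<delta> i)" unfolding f using prod_act_apply[OF w \<open>\<delta> \<in> ?D\<close> i1(2)] iwi by simp
          have b1: "f (x \<delta>) 1 = v 1 (x \<delta> 1)" unfolding f using prod_act_apply[OF w xD i1(3)] iw1 by simp
          have c1: "x \<delta> 1 = (if \<delta> i = r then u2 (\<delta> 1) else \<delta> 1)" using x1[OF \<open>\<delta> \<in> ?D\<close>] .
          have d1: "x (f \<delta>) 1 = (if f \<delta> i = r then u2 (f \<delta> 1) else f \<delta> 1)" using x1[OF fD] .
          show ?thesis unfolding True d1 b1 c1 a1 ai using vi_iff vu2 by simp
        next
          case False
          have a1: "x (f \<delta>) j = f \<delta> j" using xa[OF False] .
          have a2: "f \<delta> j = v j (\<delta> (inv w j))" unfolding f using prod_act_apply[OF w \<open>\<delta> \<in> ?D\<close> j] .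
          have a3: "f (x \<delta>) j = v j (x \<delta> (inv w j))" unfolding f using prod_act_apply[OF w xD j] .
          have a4: "x \<delta> (inv w j) = \<delta> (inv w j)" using xa[OF iwne[OF False]] .
          show ?thesis unfolding a1 a2 a3 a4 ..
        qed
      qed
    qed
    have "x \<circ> f = f \<circ> x" using xf by auto
    then have "inv x \<circ> f \<circ> x = f"
      using permutes_inv_o(2)[OF xperm] by (metis comp_assoc comp_id id_comp)
    then have "f = (\<lambda>g. inv x \<circ> g \<circ> x) f" by simp
    then have "f \<in> conj_set x (wreath_M m k)" unfolding conj_set_def using fM by (rule image_eqI)
    then show "f \<in> wreath_M m k \<inter> conj_set x (wreath_M m k)" using fM by blast
  qed
qed

end
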